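(* Let $\alpha,\beta,\gamma>0$. Let $[\Gamma(\alpha s+\beta)]^\gamma$ denote the branch, holomorphic in $s\in\mathbb{C}\setminus(-\infty,-\beta/\alpha]$, which is positive for real $s>-\beta/\alpha$. For $z\in\mathbb{C}\setminus(-\infty,0]$ fix a value $\theta$ of the argument of $-z$ and set $(-z)^s=\exp\{s(\log|z|+i\theta)\}$. Let $\mathcal{L}_{+\infty}$ be a right loop lying in a horizontal strip, starting at $+\infty+i\varphi_1$ and ending at $+\infty+i\varphi_2$ with $-\infty<\varphi_1<0<\varphi_2<+\infty$, and crossing the real axis at exactly one point $c$ with $0<c<1$ (so it encloses the points $s=1,2,\dots$ and leaves $s=0,-1,-2,\dots$ outside). Then the integral below converges and $$F_{\alpha,\beta}^{(\gamma)}(z)=\frac{1}{2\pi i}\int_{\mathcal{L}_{+\infty}}\frac{\Gamma(-s)\Gamma(1+s)}{[\Gamma(\alpha s+\beta)]^{\gamma}}(-z)^s\,ds+\frac{1}{[\Gamma(\beta)]^{\gamma}},\qquad z\in\mathbb{C}\setminus(-\infty,0].$$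
   Context: For $\alpha,\beta,\gamma>0$ the Le Roy type function is $F_{\alpha,\beta}^{(\gamma)}(z)=\sum_{k=0}^{\infty}\frac{z^k}{[\Gamma(\alpha k+\beta)]^{\gamma}}$, $z\in\mathbb{C}$, where $[\Gamma(\alpha k+\beta)]^\gamma$ is the positive real power of the positive number $\Gamma(\alpha k+\beta)$. *)

theory Defs
  imports "HOL-Analysis.Analysis"
begin

definition LeRoy :: "real \<Rightarrow> real \<Rightarrow> real \<Rightarrow> complex \<Rightarrow> complex" where
  "LeRoy \<alpha> \<beta> \<gamma> z = (\<Sum>k. z ^ k / complex_of_real (Gamma (\<alpha> * real k + \<beta>) powr \<gamma>))"

text \<open>A right loop parametrised by the whole real line: piecewise C1 on every compact
  interval, inside a horizontal strip, starting at +infinity + i phi1 (t to -infinity),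
  ending at +infinity + i phi2 (t to +infinity), meeting the real axis only at the point c.\<close>
definition right_loop :: "(real \<Rightarrow> complex) \<Rightarrow> real \<Rightarrow> real \<Rightarrow> real \<Rightarrow> bool" where
  "right_loop g \<phi>1 \<phi>2 c \<longleftrightarrow>
     (\<forall>a b. g piecewise_C1_differentiable_on {a..b}) \<and>
     bounded ((\<lambda>t. Im (g t)) ` UNIV) \<and>
     filterlim (\<lambda>t. Re (g t)) at_top at_bot \<and>
     filterlim (\<lambda>t. Re (g t)) at_top at_top \<and>
     ((\<lambda>t. Im (g t)) \<longlongrightarrow> \<phi>1) at_bot \<and>
     ((\<lambda>t. Im (g t)) \<longlongrightarrow> \<phi>2) at_top \<and>
     (\<exists>t. g t = complex_of_real c) \<and>
     (\<forall>t. Im (g t) = 0 \<longrightarrow> g t = complex_of_real c)"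

definition improper_contour_integral ::
  "(complex \<Rightarrow> complex) \<Rightarrow> (real \<Rightarrow> complex) \<Rightarrow> complex \<Rightarrow> bool" where
  "improper_contour_integral f g I \<longleftrightarrow>
     (\<forall>a b. (\<lambda>t. f (g t) * vector_derivative g (at t)) integrable_on {a..b}) \<and>
     ((\<lambda>(a, b). integral {a..b} (\<lambda>t. f (g t) * vector_derivative g (at t)))
        \<longlongrightarrow> I) (at_bot \<times>\<^sub>F at_top)"

end

theory Submission
  imports Defs "HOL-Complex_Analysis.Complex_Analysis"
begin

lemma norm_sin_ge_sin_Re: "norm (sin z) \<ge> \<bar>sin (Re z)\<bar>"
proof -
  have e: "exp(2 * Im z) + inverse(exp(2 * Im z)) \<ge> 2"
  proof -
    define t where "t = exp(2 * Im z)"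
    have "t > 0" by (simp add: t_def)
    have "(t - 1)^2 \<ge> 0" by simp
    hence "t*t + 1 \<ge> 2 * t" by (simp add: power2_eq_square algebra_simps)
    hence "t + inverse t \<ge> 2" using \<open>t>0\<close> by (simp add: field_simps)
    thus ?thesis by (simp add: t_def)
  qed
  have "norm(sin z)^2 \<ge> (sin (Re z))^2"
    using norm_sin_squared[of z] e cos_double_sin[of "Re z"] by (simp add: mult.commute)
  thus ?thesis by (metis abs_norm_cancel abs_le_square_iff)
qed

lemma norm_sin_ge_sinh_Im:
  assumes "\<bar>Im z\<bar> \<ge> d" "d \<ge> 0"
  shows "norm (sin z) \<ge> (exp d - exp (-d)) / 2"
proof -
  define y where "y = \<bar>Im z\<bar>"
  have c: "cos (2 * Re z) \<le> 1" by simp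
  have "exp(2 * Im z) + inverse(exp(2 * Im z)) = exp(2*y) + exp(-2*y)"
    by (cases "Im z \<ge> 0") (auto simp: y_def exp_minus)
  also have "\<dots> = (exp y - exp(-y))^2 + 2"
    by (simp add: power2_eq_square algebra_simps flip: exp_add)
  finally have "norm(sin z)^2 \<ge> ((exp y - exp(-y))/2)^2"
    using norm_sin_squared[of z] c by (simp add: power_divide)
  hence h: "norm(sin z) \<ge> \<bar>(exp y - exp(-y))/2\<bar>"
    by (metis abs_norm_cancel abs_le_square_iff)
  have e1: "exp d \<le> exp y" and e2: "exp (-y) \<le> exp(-d)" using assms by (auto simp: y_def)
  have "(exp d - exp (-d))/2 \<le> (exp y - exp(-y))/2"
    using diff_mono[OF e1 e2] by (rule divide_right_mono) simp
  thus ?thesis using h abs_ge_self[of "(exp y - exp(-y))/2"] by linarith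
qed

lemma Gamma_lower_bound:
  fixes Bp lam :: real
  assumes "Bp \<ge> 0" "lam \<ge> 0"
  shows "\<exists>R c. c > 0 \<and> (\<forall>w::complex. Re w \<ge> R \<and> \<bar>Im w\<bar> \<le> Bp \<longrightarrow> norm (Gamma w) \<ge> c * exp (lam * Re w))"
proof -
  define Q where "Q = exp lam"
  have Q1: "Q \<ge> 1" using assms by (simp add: Q_def)
  define R0 where "R0 = Q + 1"
  define K where "K = cbox (Complex R0 (-Bp)) (Complex (R0+1) Bp)"
  have K: "K = {w. R0 \<le> Re w \<and> Re w \<le> R0 + 1 \<and> -Bp \<le> Im w \<and> Im w \<le> Bp}"
    by (auto simp: K_def in_cbox_complex_iff)
  have nz: "\<And>w. Re w > 0 \<Longrightarrow> w \<notin> \<int>\<^sub>\<le>\<^sub>0"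
    by (auto elim!: nonpos_Ints_cases)
  have "continuous_on K (\<lambda>w. norm (Gamma w))"
    by (intro continuous_on_norm holomorphic_on_imp_continuous_on holomorphic_Gamma)
       (use nz Q1 in \<open>auto simp: K R0_def\<close>)
  moreover have "K \<noteq> {}" using assms by (auto simp: K intro!: exI[of _ "Complex R0 0"])
  ultimately obtain w0 where w0: "w0 \<in> K" "\<And>w. w \<in> K \<Longrightarrow> norm (Gamma w0) \<le> norm (Gamma w)"
    using continuous_attains_inf[of K "\<lambda>w. norm (Gamma w)"] compact_cbox unfolding K_def by blast
  define m where "m = norm (Gamma w0)"
  have "m > 0" using w0(1) nz Q1 by (auto simp: m_def K R0_def Gamma_eq_zero_iff)
  have ind: "\<And>w. R0 + real n \<le> Re w \<Longrightarrow> Re w \<le> R0 + real n + 1 \<Longrightarrow> \<bar>Im w\<bar> \<le> Bp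
              \<Longrightarrow> norm (Gamma w) \<ge> m * Q ^ n" for n
  proof (induction n)
    case 0
    then show ?case using w0(2)[of w] by (simp add: m_def K abs_le_iff)
  next
    case (Suc n)
    define v where "v = w - 1"
    have v: "R0 + real n \<le> Re v" "Re v \<le> R0 + real n + 1" "\<bar>Im v\<bar> \<le> Bp"
      using Suc.prems by (auto simp: v_def)
    have "Re v > 0" using v Q1 by (simp add: R0_def)
    have "Gamma w = v * Gamma v"
      using Gamma_plus1[of v] nz[OF \<open>Re v > 0\<close>] by (simp add: v_def)
    hence "norm (Gamma w) = norm v * norm (Gamma v)" by (simp add: norm_mult)
    moreover have "norm v \<ge> Q" using v complex_Re_le_cmod[of v] by (simp add: R0_def)
    moreover have "norm (Gamma v) \<ge> m * Q ^ n" using Suc.IH v by blast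
    moreover have "Q * (m * Q ^ n) \<le> norm v * norm (Gamma v)"
      using calculation \<open>m > 0\<close> Q1 by (intro mult_mono) auto
    ultimately have "norm (Gamma w) \<ge> Q * (m * Q ^ n)" by simp
    thus ?case by (simp add: algebra_simps)
  qed
  define c where "c = m * exp (- lam * (R0 + 1))"
  have "c > 0" using \<open>m>0\<close> by (simp add: c_def)
  have "\<forall>w::complex. Re w \<ge> R0 \<and> \<bar>Im w\<bar> \<le> Bp \<longrightarrow> norm (Gamma w) \<ge> c * exp (lam * Re w)"
  proof (intro allI impI)
    fix w :: complex assume w: "Re w \<ge> R0 \<and> \<bar>Im w\<bar> \<le> Bp"
    define n where "n = nat \<lfloor>Re w - R0\<rfloor>"
    have n1: "real n \<le> Re w - R0" "Re w - R0 < real n + 1" using w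
      by (auto simp: n_def)
    have "norm (Gamma w) \<ge> m * Q ^ n" using ind[of n w] n1 w by auto
    moreover have "Q ^ n = exp (lam * real n)" by (simp add: Q_def flip: exp_of_nat_mult mult.commute)
    moreover have "exp (lam * Re w) * exp (- lam * (R0 + 1)) \<le> exp (lam * real n)"
      using n1 assms by (simp flip: exp_add) (simp add: mult_left_mono flip: distrib_left right_diff_distrib)
    ultimately show "norm (Gamma w) \<ge> c * exp (lam * Re w)"
    proof -
      have "c * exp (lam * Re w) = m * (exp (lam * Re w) * exp (- lam * (R0 + 1)))"
        by (simp add: c_def)
      also have "\<dots> \<le> m * exp (lam * real n)"
        using \<open>exp (lam * Re w) * exp (- lam * (R0 + 1)) \<le> exp (lam * real n)\<close> \<open>m>0\<close>
        by (intro mult_left_mono) auto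
      finally show ?thesis using \<open>norm (Gamma w) \<ge> m * Q ^ n\<close> \<open>Q ^ n = exp (lam * real n)\<close> by simp
    qed
  qed
  thus ?thesis using \<open>c>0\<close> by blast
qed

lemma slit_open: "open (- {s::complex. Im s = 0 \<and> Re s \<le> r})"
proof -
  have "closed {s::complex. Im s = 0 \<and> Re s \<le> r}"
    by (intro closed_Collect_conj closed_Collect_eq closed_Collect_le continuous_intros)
  thus ?thesis by (simp add: open_Compl)
qed

lemma slit_starlike:
  assumes "r < 0"
  shows "starlike (- {s::complex. Im s = 0 \<and> Re s \<le> r})"
  unfolding starlike_def
proof (intro bexI ballI subsetI)
  show "0 \<in> - {s::complex. Im s = 0 \<and> Re s \<le> r}" using assms by auto
  fix x p assume x: "x \<in> - {s::complex. Im s = 0 \<and> Re s \<le> r}" and p: "p \<in> closed_segment 0 x"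
  then obtain u where u: "0 \<le> u" "u \<le> 1" "p = u *\<^sub>R x" by (auto simp: closed_segment_def)
  show "p \<in> - {s::complex. Im s = 0 \<and> Re s \<le> r}"
  proof (cases "u = 0")
    case True thus ?thesis using u assms by auto
  next
    case False
    hence "u > 0" using u by auto
    show ?thesis
    proof (cases "Im x = 0")
      case True
      hence "Re x > r" using x by auto
      hence "u * Re x > r"
      proof (cases "Re x \<ge> 0")
        case True thus ?thesis using \<open>u>0\<close> assms using mult_nonneg_nonneg[of u "Re x"] by linarith
      next
        case False
        hence "u * Re x \<ge> Re x" using u by (simp add: mult_le_cancel_right1)
        thus ?thesis using \<open>Re x > r\<close> by linarith
      qed
      thus ?thesis using u by auto
    next
      case False thus ?thesis using u \<open>u>0\<close> by auto
    qed
  qed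
qed

lemma G_identify:
  fixes \<alpha> \<beta> \<gamma> :: real and G :: "complex \<Rightarrow> complex"
  assumes "\<alpha> > 0" "\<beta> > 0"
    and G_holo: "G holomorphic_on (- {s. Im s = 0 \<and> Re s \<le> - \<beta> / \<alpha>})"
    and G_real: "\<And>x::real. x > - \<beta> / \<alpha> \<Longrightarrow>
                   G (complex_of_real x) = complex_of_real (Gamma (\<alpha> * x + \<beta>) powr \<gamma>)"
    and s: "s \<in> - {s. Im s = 0 \<and> Re s \<le> - \<beta> / \<alpha>}"
  shows "G s = exp (of_real \<gamma> * ln_Gamma (of_real \<alpha> * s + of_real \<beta>))"
proof -
  define S where "S = - {s::complex. Im s = 0 \<and> Re s \<le> - \<beta> / \<alpha>}"
  define H where "H = (\<lambda>s::complex. exp (of_real \<gamma> * ln_Gamma (of_real \<alpha> * s + of_real \<beta>)))"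
  have ngt: "- \<beta> / \<alpha> < 0" using assms by simp
  have oS: "open S" unfolding S_def by (rule slit_open)
  have cS: "connected S" unfolding S_def by (intro starlike_imp_connected slit_starlike ngt)
  have notnp: "of_real \<alpha> * s + of_real \<beta> \<notin> \<real>\<^sub>\<le>\<^sub>0" if "s \<in> S" for s
  proof
    assume "of_real \<alpha> * s + of_real \<beta> \<in> \<real>\<^sub>\<le>\<^sub>0"
    then obtain t where t: "t \<le> 0" "of_real \<alpha> * s + of_real \<beta> = of_real t"
      by (auto elim!: nonpos_Reals_cases)
    hence "Im s = 0" "\<alpha> * Re s + \<beta> = t" using assms
      by (auto simp: complex_eq_iff)
    hence "Re s \<le> - \<beta> / \<alpha>" using assms t by (simp add: field_simps)
    thus False using that \<open>Im s = 0\<close> by (auto simp: S_def)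
  qed
  have hH: "H holomorphic_on S" unfolding H_def
    by (intro holomorphic_intros holomorphic_on_compose[of _ _ ln_Gamma, unfolded o_def] holomorphic_ln_Gamma)
       (use notnp in auto)
  have "(\<lambda>s. G s - H s) holomorphic_on S" using G_holo hH by (intro holomorphic_intros) (auto simp: S_def)
  moreover define U where "U = complex_of_real ` {0<..}"
  have US: "U \<subseteq> S" using ngt by (auto simp: U_def S_def)
  have lim: "1 islimpt U"
    unfolding islimpt_approachable
  proof (intro allI impI)
    fix e :: real assume "e > 0"
    show "\<exists>x'\<in>U. x' \<noteq> 1 \<and> dist x' 1 < e"
    proof (intro bexI[of _ "of_real (1 + e/2)"])
      show "complex_of_real (1 + e / 2) \<in> U" using \<open>e>0\<close> unfolding U_def by (intro imageI) auto
    qed (use \<open>e>0\<close> in \<open>auto simp: dist_norm\<close>)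
  qed
  have U0: "G z - H z = 0" if zU: "z \<in> U" for z
  proof -
    obtain x where x: "x > 0" "z = of_real x" using zU unfolding U_def by auto
    have p: "\<alpha> * x + \<beta> > 0" using x assms by (simp add: add_pos_pos)
    have "G z = of_real (Gamma (\<alpha> * x + \<beta>) powr \<gamma>)" using G_real[of x] x ngt by simp
    also have "Gamma (\<alpha> * x + \<beta>) powr \<gamma> = exp (\<gamma> * ln_Gamma (\<alpha> * x + \<beta>))"
      using p by (simp add: powr_def Gamma_real_pos_exp)
    also have "of_real (exp (\<gamma> * ln_Gamma (\<alpha> * x + \<beta>))) = H z"
    proof -
      have e: "of_real \<alpha> * z + of_real \<beta> = complex_of_real (\<alpha> * x + \<beta>)" by (simp add: x(2))
      show ?thesis unfolding H_def e ln_Gamma_complex_of_real[OF p] of_real_mult[symmetric] exp_of_real by (rule refl)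
    qed
    finally show ?thesis by simp
  qed
  have "1 \<in> S" using ngt by (auto simp: S_def)
  ultimately have "G s - H s = 0"
    using analytic_continuation[of "\<lambda>s. G s - H s" S U 1 s] oS cS US lim U0 s by (auto simp: S_def)
  thus ?thesis by (simp add: H_def)
qed

lemma GG_reflect: fixes s :: complex shows "Gamma (- s) * Gamma (1 + s) = - of_real pi / sin (of_real pi * s)"
proof -
  have "Gamma (1 + s) * Gamma (1 - (1 + s)) = of_real pi / sin (of_real pi * (1 + s))"
    by (rule Gamma_reflection_complex)
  moreover have "sin (of_real pi * (1 + s)) = - sin (of_real pi * s)"
    by (simp add: distrib_left sin_add)
  ultimately show ?thesis by (simp add: mult.commute)
qed

lemma f_bound:
  fixes \<alpha> \<beta> \<gamma> \<theta> Bim m0 :: real and G :: "complex \<Rightarrow> complex" and z :: complex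
  assumes "\<alpha> > 0" "\<beta> > 0" "\<gamma> > 0" "Bim \<ge> 0" "m0 > 0"
    and Gn: "\<And>s. Re s > 0 \<Longrightarrow> norm (G s) = norm (Gamma (of_real \<alpha> * s + of_real \<beta>)) powr \<gamma>"
  shows "\<exists>R K. R \<ge> 1 \<and> K \<ge> 0 \<and> (\<forall>s. Re s \<ge> R \<and> \<bar>Im s\<bar> \<le> Bim \<and> norm (sin (of_real pi * s)) \<ge> m0 \<longrightarrow>
     norm (Gamma (- s) * Gamma (1 + s) / G s * exp (s * (of_real (ln (norm z)) + \<i> * of_real \<theta>))) \<le> K * exp (- Re s))"
proof -
  define lz where "lz = ln (norm z)"
  define lam where "lam = (\<bar>lz\<bar> + 1) / (\<gamma> * \<alpha>)"
  have lam0: "lam \<ge> 0" using assms by (simp add: lam_def)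
  have glam: "\<gamma> * lam * \<alpha> = \<bar>lz\<bar> + 1" using assms by (simp add: lam_def)
  obtain RG c where c: "c > 0" and RG: "\<And>w::complex. Re w \<ge> RG \<Longrightarrow> \<bar>Im w\<bar> \<le> \<alpha> * Bim \<Longrightarrow> norm (Gamma w) \<ge> c * exp (lam * Re w)"
    using Gamma_lower_bound[of "\<alpha> * Bim" lam] assms lam0 by auto
  define R where "R = max 1 ((RG - \<beta>) / \<alpha>)"
  define K where "K = pi / m0 * exp (Bim * \<bar>\<theta>\<bar>) / (c powr \<gamma>)"
  have K0: "K \<ge> 0" using assms by (simp add: K_def)
  have "\<forall>s. Re s \<ge> R \<and> \<bar>Im s\<bar> \<le> Bim \<and> norm (sin (of_real pi * s)) \<ge> m0 \<longrightarrow>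
     norm (Gamma (- s) * Gamma (1 + s) / G s * exp (s * (of_real lz + \<i> * of_real \<theta>))) \<le> K * exp (- Re s)"
  proof (intro allI impI)
    fix s :: complex assume s: "Re s \<ge> R \<and> \<bar>Im s\<bar> \<le> Bim \<and> norm (sin (of_real pi * s)) \<ge> m0"
    define x where "x = Re s"
    define w where "w = of_real \<alpha> * s + of_real \<beta>"
    have x1: "x \<ge> 1" using s by (simp add: x_def R_def)
    have "x \<ge> (RG - \<beta>) / \<alpha>" using s by (simp add: x_def R_def)
    hence Rew: "Re w \<ge> RG" using assms by (simp add: w_def x_def field_simps)
    have Imw: "\<bar>Im w\<bar> \<le> \<alpha> * Bim" using s assms by (simp add: w_def abs_mult)
    have gw: "norm (Gamma w) \<ge> c * exp (lam * Re w)" using RG Rew Imw by blast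
    have "norm (G s) = norm (Gamma w) powr \<gamma>" using Gn[of s] x1 by (simp add: w_def x_def)
    also have "\<dots> \<ge> (c * exp (lam * Re w)) powr \<gamma>"
      using gw c assms by (intro powr_mono2) auto
    finally have G1: "norm (G s) \<ge> c powr \<gamma> * exp (\<gamma> * lam * (\<alpha> * x + \<beta>))"
      using c by (simp add: powr_mult exp_powr_real w_def x_def mult_ac)
    have Gpos: "c powr \<gamma> * exp (\<gamma> * lam * (\<alpha> * x + \<beta>)) > 0" using c by simp
    have n1: "norm (Gamma (- s) * Gamma (1 + s)) \<le> pi / m0"
      using s assms by (simp add: GG_reflect norm_divide frac_le)
    have n2: "norm (exp (s * (of_real lz + \<i> * of_real \<theta>))) \<le> exp (x * lz + Bim * \<bar>\<theta>\<bar>)"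
    proof -
      have "Re (s * (of_real lz + \<i> * of_real \<theta>)) = x * lz - Im s * \<theta>" by (simp add: x_def)
      also have "\<dots> \<le> x * lz + Bim * \<bar>\<theta>\<bar>"
      proof -
        have "- (Im s * \<theta>) \<le> \<bar>Im s\<bar> * \<bar>\<theta>\<bar>" by (simp add: abs_mult[symmetric])
        also have "\<dots> \<le> Bim * \<bar>\<theta>\<bar>" using s by (intro mult_right_mono) auto
        finally show ?thesis by simp
      qed
      finally show ?thesis by simp
    qed
    have "norm (Gamma (- s) * Gamma (1 + s) / G s * exp (s * (of_real lz + \<i> * of_real \<theta>)))
        = norm (Gamma (- s) * Gamma (1 + s)) * norm (exp (s * (of_real lz + \<i> * of_real \<theta>))) / norm (G s)"
      by (simp add: norm_mult norm_divide)
    also have "\<dots> \<le> (pi / m0) * exp (x * lz + Bim * \<bar>\<theta>\<bar>) / (c powr \<gamma> * exp (\<gamma> * lam * (\<alpha> * x + \<beta>)))"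
      using n1 n2 G1 Gpos \<open>m0 > 0\<close> by (intro frac_le mult_mono) (auto simp: x_def)
    also have "\<dots> = K * exp (x * lz - \<gamma> * lam * (\<alpha> * x + \<beta>))"
      using c by (simp add: K_def exp_diff exp_add mult_ac)
    also have "\<dots> \<le> K * exp (- x)"
    proof -
      have "\<gamma> * lam * (\<alpha> * x + \<beta>) = (\<bar>lz\<bar> + 1) * x + \<gamma> * lam * \<beta>" proof -
        have "\<gamma> * lam * (\<alpha> * x + \<beta>) = (\<gamma> * lam * \<alpha>) * x + \<gamma> * lam * \<beta>" by (simp add: algebra_simps)
        thus ?thesis unfolding glam .
      qed
      moreover have "\<gamma> * lam * \<beta> \<ge> 0" using assms lam0 by simp
      moreover have "x * lz \<le> x * \<bar>lz\<bar>" using x1 by (intro mult_left_mono) auto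
      ultimately have "x * lz - \<gamma> * lam * (\<alpha> * x + \<beta>) \<le> - x" by (simp add: algebra_simps)
      thus ?thesis using K0 by (intro mult_left_mono) auto
    qed
    finally show "norm (Gamma (- s) * Gamma (1 + s) / G s * exp (s * (of_real lz + \<i> * of_real \<theta>))) \<le> K * exp (- Re s)"
      by (simp add: x_def)
  qed
  moreover have "R \<ge> 1" by (simp add: R_def)
  ultimately show ?thesis using K0 unfolding lz_def by blast
qed

lemma seg_bounds:
  assumes "q \<in> closed_segment a b"
  shows "min (Re a) (Re b) \<le> Re q \<and> Re q \<le> max (Re a) (Re b) \<and>
         min (Im a) (Im b) \<le> Im q \<and> Im q \<le> max (Im a) (Im b)"
proof -
  obtain u where u: "0 \<le> u" "u \<le> 1" "q = (1 - u) *\<^sub>R a + u *\<^sub>R b"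
    using assms by (auto simp: closed_segment_def)
  have "Re q \<in> closed_segment (Re a) (Re b)" "Im q \<in> closed_segment (Im a) (Im b)"
    using u by (auto simp: closed_segment_def intro!: exI[of _ u])
  thus ?thesis by (auto simp: closed_segment_eq_real_ivl split: if_splits)
qed

lemma telescope_conv:
  fixes u :: "nat \<Rightarrow> complex"
  assumes "summable (\<lambda>n. u (Suc n) - u n)"
  shows "\<exists>l. u \<longlonglongrightarrow> l"
proof -
  have "(\<lambda>n. \<Sum>i<n. u (Suc i) - u i) \<longlonglongrightarrow> suminf (\<lambda>n. u (Suc n) - u n)"
    using summable_LIMSEQ[OF assms] .
  hence "(\<lambda>n. u n - u 0) \<longlonglongrightarrow> suminf (\<lambda>n. u (Suc n) - u n)"
    by (simp add: sum_lessThan_telescope)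
  hence "(\<lambda>n. (u n - u 0) + u 0) \<longlonglongrightarrow> suminf (\<lambda>n. u (Suc n) - u n) + u 0"
    by (intro tendsto_add tendsto_const)
  thus ?thesis by auto
qed

lemma summable_exp_bound:
  fixes d :: "nat \<Rightarrow> complex"
  assumes "\<And>n. n \<ge> N \<Longrightarrow> norm (d n) \<le> K * exp (- real n)"
  shows "summable d"
proof (rule summable_comparison_test')
  have "summable (\<lambda>n. K * exp (-1) ^ n)"
    by (intro summable_mult summable_geometric) simp
  thus "summable (\<lambda>n. K * exp (- real n))"
    by (simp add: exp_of_nat_mult[symmetric] mult.commute)
qed (use assms in auto)

lemma exp_bound_lim: "(\<lambda>n. K * exp (- real n)) \<longlonglongrightarrow> 0"
proof -
  have "(\<lambda>n. K * exp (-1) ^ n) \<longlonglongrightarrow> K * 0"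
    by (intro tendsto_mult tendsto_const LIMSEQ_power_zero) simp
  thus ?thesis by (simp add: exp_of_nat_mult[symmetric] mult.commute)
qed

theorem theorem2p2:
  fixes \<alpha> \<beta> \<gamma> \<theta> \<phi>1 \<phi>2 c :: real
    and G :: "complex \<Rightarrow> complex" and g :: "real \<Rightarrow> complex" and z :: complex
  assumes "\<alpha> > 0" "\<beta> > 0" "\<gamma> > 0"
    and G_holo: "G holomorphic_on (- {s. Im s = 0 \<and> Re s \<le> - \<beta> / \<alpha>})"
    and G_real: "\<And>x::real. x > - \<beta> / \<alpha> \<Longrightarrow>
                   G (complex_of_real x) = complex_of_real (Gamma (\<alpha> * x + \<beta>) powr \<gamma>)"
    and z: "z \<notin> {w. Im w = 0 \<and> Re w \<le> 0}"
    and \<theta>: "- z = complex_of_real (norm z) * exp (\<i> * complex_of_real \<theta>)"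
    and "\<phi>1 < 0" "0 < \<phi>2" "0 < c" "c < 1"
    and loop: "right_loop g \<phi>1 \<phi>2 c"
  shows "\<exists>I. improper_contour_integral
              (\<lambda>s. Gamma (- s) * Gamma (1 + s) / G s
                     * exp (s * (complex_of_real (ln (norm z)) + \<i> * complex_of_real \<theta>)))
              g I
           \<and> LeRoy \<alpha> \<beta> \<gamma> z = I / (2 * pi * \<i>) + 1 / complex_of_real (Gamma \<beta> powr \<gamma>)"
proof -
  define L where "L = complex_of_real (ln (norm z)) + \<i> * complex_of_real \<theta>"
  define f where "f = (\<lambda>s. Gamma (- s) * Gamma (1 + s) / G s * exp (s * L))"
  define SD where "SD = - {s::complex. Im s = 0 \<and> Re s \<le> - \<beta> / \<alpha>}"
  have z0: "z \<noteq> 0" using z by auto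
  have ngt: "- \<beta> / \<alpha> < 0" using assms by simp
  have SDpos: "\<And>s. Re s > 0 \<Longrightarrow> s \<in> SD" using ngt by (auto simp: SD_def)
  have Gid: "\<And>s. s \<in> SD \<Longrightarrow> G s = exp (of_real \<gamma> * ln_Gamma (of_real \<alpha> * s + of_real \<beta>))"
    using G_identify[OF assms(1,2) G_holo G_real] unfolding SD_def by blast
  have wnp: "of_real \<alpha> * s + of_real \<beta> \<notin> \<real>\<^sub>\<le>\<^sub>0" if "s \<in> SD" for s
  proof
    assume "of_real \<alpha> * s + of_real \<beta> \<in> \<real>\<^sub>\<le>\<^sub>0"
    then obtain t where t: "t \<le> 0" "of_real \<alpha> * s + of_real \<beta> = of_real t"
      by (auto elim!: nonpos_Reals_cases)
    hence "Im s = 0" "\<alpha> * Re s + \<beta> = t" using assms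
      by (auto simp: complex_eq_iff)
    hence "Re s \<le> - \<beta> / \<alpha>" using assms t by (simp add: field_simps)
    thus False using that \<open>Im s = 0\<close> by (auto simp: SD_def)
  qed
  have Gnz: "\<And>s. s \<in> SD \<Longrightarrow> G s \<noteq> 0" using Gid by simp
  have Gn: "norm (G s) = norm (Gamma (of_real \<alpha> * s + of_real \<beta>)) powr \<gamma>" if "s \<in> SD" for s
  proof -
    define w where "w = of_real \<alpha> * s + of_real \<beta>"
    have "w \<notin> \<int>\<^sub>\<le>\<^sub>0" using wnp[OF that] nonpos_Ints_subset_nonpos_Reals by (auto simp: w_def)
    hence "Gamma w = exp (ln_Gamma w)" by (simp add: Gamma_complex_altdef)
    thus ?thesis using Gid[OF that] by (simp add: w_def exp_powr_real mult.commute)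
  qed
  obtain Bim0 where Bim0: "\<And>t. \<bar>Im (g t)\<bar> \<le> Bim0"
    using loop unfolding right_loop_def bounded_real by auto
  define Bim where "Bim = max Bim0 (max \<phi>2 (- \<phi>1))"
  have Bim: "\<And>t. \<bar>Im (g t)\<bar> \<le> Bim" "\<phi>2 \<le> Bim" "- \<phi>1 \<le> Bim" "Bim \<ge> 0"
    using Bim0 assms by (auto simp: Bim_def intro: order_trans[OF _ max.cobounded1])
  define \<delta> where "\<delta> = min \<phi>2 (- \<phi>1) / 2"
  have \<delta>: "\<delta> > 0" "\<delta> \<le> \<phi>2 / 2" "\<delta> \<le> - \<phi>1 / 2" using assms by (auto simp: \<delta>_def)
  define m0 where "m0 = min 1 ((exp (pi * \<delta>) - exp (- (pi * \<delta>))) / 2)"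
  have m0: "m0 > 0" using \<delta> by (simp add: m0_def)
  have sinb1: "norm (sin (of_real pi * s)) \<ge> m0" if "\<bar>Im s\<bar> \<ge> \<delta>" for s
  proof -
    have "\<bar>Im (of_real pi * s)\<bar> \<ge> pi * \<delta>" using that by (simp add: abs_mult)
    hence "norm (sin (of_real pi * s)) \<ge> (exp (pi * \<delta>) - exp (- (pi * \<delta>))) / 2"
      using \<delta> by (intro norm_sin_ge_sinh_Im) auto
    thus ?thesis unfolding m0_def by (rule order_trans[OF min.cobounded2])
  qed
  have sinb2: "norm (sin (of_real pi * s)) \<ge> m0" if "Re s = real n + 1/2" for s n
  proof -
    have "sin (Re (of_real pi * s)) = sin (real n * pi + pi / 2)" using that by (simp add: algebra_simps)
    also have "\<dots> = (-1) ^ n" by (simp add: sin_add)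
    finally have "\<bar>sin (Re (of_real pi * s))\<bar> = 1" by simp
    thus ?thesis using norm_sin_ge_sin_Re[of "of_real pi * s"] by (simp add: m0_def)
  qed
  obtain R K where RK: "R \<ge> 1" "K \<ge> 0" and fb0: "\<And>s. Re s \<ge> R \<Longrightarrow> \<bar>Im s\<bar> \<le> Bim \<Longrightarrow> norm (sin (of_real pi * s)) \<ge> m0 \<Longrightarrow> norm (f s) \<le> K * exp (- Re s)"
    using f_bound[OF assms(1,2,3) \<open>Bim \<ge> 0\<close> m0, of G z \<theta>] Gn SDpos unfolding f_def L_def by blast
  have fb: "norm (f s) \<le> K * exp (- Re s)" if "Re s \<ge> R" "\<bar>Im s\<bar> \<le> Bim" "\<bar>Im s\<bar> \<ge> \<delta> \<or> (\<exists>n. Re s = real n + 1/2)" for s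
    using fb0[OF that(1,2)] that(3) sinb1 sinb2 by blast
  define UD where "UD = SD - \<int>"
  have notInt: "s \<notin> \<int>" if "Im s \<noteq> 0" for s :: complex using that by (auto elim!: Ints_cases)
  have fholo: "f holomorphic_on UD"
  proof -
    have a: "- s \<notin> \<int>\<^sub>\<le>\<^sub>0" if "s \<in> UD" for s
    proof
      assume "- s \<in> \<int>\<^sub>\<le>\<^sub>0"
      then obtain k where "- s = of_int k" by (auto elim!: nonpos_Ints_cases)
      hence "s = of_int (- k)" by (metis minus_minus of_int_minus)
      thus False using that by (auto simp: UD_def)
    qed
    have b: "1 + s \<notin> \<int>\<^sub>\<le>\<^sub>0" if "s \<in> UD" for s
    proof
      assume "1 + s \<in> \<int>\<^sub>\<le>\<^sub>0"
      then obtain k where "1 + s = of_int k" by (auto elim!: nonpos_Ints_cases)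
      hence "s = of_int (k - 1)" by (simp add: algebra_simps)
      thus False using that by (auto simp: UD_def)
    qed
    have "G holomorphic_on UD" using G_holo by (rule holomorphic_on_subset) (auto simp: UD_def SD_def)
    thus ?thesis unfolding f_def using a b Gnz
      by (intro holomorphic_intros holomorphic_Gamma') (auto simp: UD_def)
  qed
  define \<Omega> where "\<Omega> = {s::complex. Im s \<noteq> 0 \<or> (0 < Re s \<and> Re s < 1)}"
  have \<Omega>U: "\<Omega> \<subseteq> UD"
  proof
    fix s assume s: "s \<in> \<Omega>"
    show "s \<in> UD"
    proof (cases "Im s = 0")
      case True
      hence "0 < Re s" "Re s < 1" using s by (auto simp: \<Omega>_def)
      moreover have "s \<notin> \<int>"
      proof
        assume "s \<in> \<int>" then obtain k where "s = of_int k" by (auto elim!: Ints_cases)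
        thus False using \<open>0 < Re s\<close> \<open>Re s < 1\<close> by simp
      qed
      ultimately show ?thesis using SDpos by (auto simp: UD_def)
    next
      case False thus ?thesis using notInt by (auto simp: UD_def SD_def)
    qed
  qed
  have o\<Omega>: "open \<Omega>"
  proof -
    have "\<Omega> = - ({s. Im s = 0 \<and> Re s \<le> 0} \<union> {s. Im s = 0 \<and> Re s \<ge> 1})"
      by (auto simp: \<Omega>_def)
    moreover have "closed ({s::complex. Im s = 0 \<and> Re s \<le> 0} \<union> {s. Im s = 0 \<and> Re s \<ge> 1})"
      by (intro closed_Un closed_Collect_conj closed_Collect_eq closed_Collect_le continuous_intros)
    ultimately show ?thesis by (metis open_Compl)
  qed
  have st\<Omega>: "starlike \<Omega>"
    unfolding starlike_def
  proof (intro bexI ballI subsetI)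
    show "complex_of_real (1/2) \<in> \<Omega>" by (simp add: \<Omega>_def)
    fix x p assume x: "x \<in> \<Omega>" and p: "p \<in> closed_segment (complex_of_real (1/2)) x"
    then obtain u where u: "0 \<le> u" "u \<le> 1" "p = (1 - u) *\<^sub>R complex_of_real (1/2) + u *\<^sub>R x"
      by (auto simp: closed_segment_def)
    show "p \<in> \<Omega>"
    proof (cases "Im x = 0")
      case True
      hence "0 < Re x" "Re x < 1" using x by (auto simp: \<Omega>_def)
      have Rep: "Re p = (1 - u) / 2 + u * Re x" using u by simp
      have h1: "u * Re x \<ge> 0" using u \<open>0 < Re x\<close> by simp
      have h2: "u * Re x \<le> u" using u \<open>Re x < 1\<close> by (intro mult_left_le) auto
      have "0 < Re p \<and> Re p < 1"
      proof (cases "u = 1")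
        case True thus ?thesis using Rep \<open>0 < Re x\<close> \<open>Re x < 1\<close> by simp
      next
        case False hence "u < 1" using u by simp
        have a1: "(1 - u) / 2 > 0" using \<open>u < 1\<close> by simp
        have a2: "(1 - u) / 2 + u < 1" using \<open>u < 1\<close> by (simp add: field_simps)
        have "0 < (1 - u) / 2 + u * Re x" using a1 h1 by linarith
        moreover have "(1 - u) / 2 + u * Re x < 1" using a2 h2 by linarith
        ultimately show ?thesis unfolding Rep by simp
      qed
      hence "0 < Re p" "Re p < 1" by auto
      thus ?thesis by (simp add: \<Omega>_def)
    next
      case False
      show ?thesis
      proof (cases "u = 0")
        case True hence pe: "p = complex_of_real (1/2)" using u by simp
        have "Re p = 1/2" "Im p = 0" unfolding pe by simp_all
        thus ?thesis by (simp add: \<Omega>_def)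
      next
        case False
        thus ?thesis using u \<open>Im x \<noteq> 0\<close> by (simp add: \<Omega>_def)
      qed
    qed
  qed
  have fholo\<Omega>: "f holomorphic_on \<Omega>" using fholo \<Omega>U by (rule holomorphic_on_subset)
  obtain F where F: "\<And>x. x \<in> \<Omega> \<Longrightarrow> (F has_field_derivative f x) (at x)"
  proof -
    have "\<exists>F. \<forall>x \<in> \<Omega>. (F has_field_derivative f x) (at x)"
      using fholo\<Omega> o\<Omega> st\<Omega>
      by (intro holomorphic_starlike_primitive[where k = "{}"])
         (auto intro: holomorphic_on_imp_continuous_on holomorphic_on_imp_differentiable_at)
    thus ?thesis using that by blast
  qed
  have seg: "(f has_contour_integral (F b - F a)) (linepath a b)" if "closed_segment a b \<subseteq> \<Omega>" for a b
    using contour_integral_primitive[of \<Omega> F f "linepath a b"] that F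
    by (auto intro: has_field_derivative_at_within)
  have segb: "norm (F b - F a) \<le> M * norm (b - a)"
    if "closed_segment a b \<subseteq> \<Omega>" "\<And>q. q \<in> closed_segment a b \<Longrightarrow> norm (f q) \<le> M" "M \<ge> 0" for a b M
    using has_contour_integral_bound_linepath[OF seg[OF that(1)] that(3) that(2)] .
  have upper: "closed_segment a b \<subseteq> \<Omega>" if "Im a > 0" "Im b > 0" for a b
  proof
    fix q assume "q \<in> closed_segment a b"
    hence "Im q \<ge> min (Im a) (Im b)" using seg_bounds by blast
    thus "q \<in> \<Omega>" using that by (auto simp: \<Omega>_def)
  qed
  have lower: "closed_segment a b \<subseteq> \<Omega>" if "Im a < 0" "Im b < 0" for a b
  proof
    fix q assume "q \<in> closed_segment a b"
    hence "Im q \<le> max (Im a) (Im b)" using seg_bounds by blast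
    thus "q \<in> \<Omega>" using that by (auto simp: \<Omega>_def)
  qed
  define A where "A = (\<lambda>n::nat. Complex (real n + 1/2) \<phi>2)"
  define B where "B = (\<lambda>n::nat. Complex (real n + 1/2) \<phi>1)"
  have ReA[simp]: "Re (A n) = real n + 1/2" "Im (A n) = \<phi>2" for n by (simp_all add: A_def)
  have ReB[simp]: "Re (B n) = real n + 1/2" "Im (B n) = \<phi>1" for n by (simp_all add: B_def)
  obtain NR :: nat where NR: "R \<le> real NR" using real_arch_simple by blast
  have dA: "norm (F (A (Suc n)) - F (A n)) \<le> K * exp (- real n)" if "n \<ge> NR" for n
  proof -
    have sub: "closed_segment (A n) (A (Suc n)) \<subseteq> \<Omega>" using assms by (intro upper) auto
    have "norm (F (A (Suc n)) - F (A n)) \<le> K * exp (- real n) * norm (A (Suc n) - A n)"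
    proof (rule segb[OF sub])
      fix q assume q: "q \<in> closed_segment (A n) (A (Suc n))"
      from seg_bounds[OF q] have q1: "Re q \<ge> real n + 1/2" "Im q = \<phi>2" by auto
      have "real n \<ge> R" using that NR by linarith
      hence "norm (f q) \<le> K * exp (- Re q)" using q1 Bim \<delta> by (intro fb) auto
      also have "\<dots> \<le> K * exp (- real n)" using q1 RK by (intro mult_left_mono) auto
      finally show "norm (f q) \<le> K * exp (- real n)" .
    qed (use RK in auto)
    also have "A (Suc n) - A n = 1" by (simp add: complex_eq_iff)
    finally show ?thesis by simp
  qed
  have dB: "norm (F (B (Suc n)) - F (B n)) \<le> K * exp (- real n)" if "n \<ge> NR" for n
  proof -
    have sub: "closed_segment (B n) (B (Suc n)) \<subseteq> \<Omega>" using assms by (intro lower) auto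
    have "norm (F (B (Suc n)) - F (B n)) \<le> K * exp (- real n) * norm (B (Suc n) - B n)"
    proof (rule segb[OF sub])
      fix q assume q: "q \<in> closed_segment (B n) (B (Suc n))"
      from seg_bounds[OF q] have q1: "Re q \<ge> real n + 1/2" "Im q = \<phi>1" by auto
      have "real n \<ge> R" using that NR by linarith
      hence "norm (f q) \<le> K * exp (- Re q)" using q1 Bim \<delta> by (intro fb) auto
      also have "\<dots> \<le> K * exp (- real n)" using q1 RK by (intro mult_left_mono) auto
      finally show "norm (f q) \<le> K * exp (- real n)" .
    qed (use RK in auto)
    also have "B (Suc n) - B n = 1" by (simp add: complex_eq_iff)
    finally show ?thesis by simp
  qed
  have "summable (\<lambda>n. F (A (Suc n)) - F (A n))" by (rule summable_exp_bound[of NR _ K]) (use dA in auto)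
  then obtain Lup where Lup: "(\<lambda>n. F (A n)) \<longlonglongrightarrow> Lup"
    using telescope_conv[of "\<lambda>n. F (A n)"] by auto
  have "summable (\<lambda>n. F (B (Suc n)) - F (B n))" by (rule summable_exp_bound[of NR _ K]) (use dB in auto)
  then obtain Llow where Llow: "(\<lambda>n. F (B n)) \<longlonglongrightarrow> Llow"
    using telescope_conv[of "\<lambda>n. F (B n)"] by auto
  define V where "V = (\<lambda>n. contour_integral (linepath (B n) (A n)) f)"
  have vseg: "closed_segment (B n) (A n) \<subseteq> UD" for n
  proof
    fix q assume q: "q \<in> closed_segment (B n) (A n)"
    from seg_bounds[OF q] have q1: "Re q = real n + 1/2" by auto
    have "q \<notin> \<int>"
    proof
      assume "q \<in> \<int>" then obtain m where "q = of_int m" by (auto elim!: Ints_cases)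
      hence "real_of_int m = real n + 1/2" using q1 by simp
      hence "real_of_int (2 * m) = real_of_int (2 * int n + 1)" by simp
      hence "2 * m = 2 * int n + 1" by (simp only: of_int_eq_iff)
      thus False by presburger
    qed
    thus "q \<in> UD" using SDpos q1 by (auto simp: UD_def)
  qed
  have Vhas: "(f has_contour_integral V n) (linepath (B n) (A n))" for n
    unfolding V_def
    by (intro has_contour_integral_integral contour_integrable_continuous_linepath
              continuous_on_subset[OF holomorphic_on_imp_continuous_on[OF fholo] vseg])
  have Vb: "norm (V n) \<le> K * exp (- real n) * norm (A n - B n)" if "n \<ge> NR" for n
  proof (rule has_contour_integral_bound_linepath[OF Vhas])
    fix q assume q: "q \<in> closed_segment (B n) (A n)"
    from seg_bounds[OF q] have q1: "Re q = real n + 1/2" "\<phi>1 \<le> Im q" "Im q \<le> \<phi>2" using assms by auto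
    have "real n \<ge> R" using that NR by linarith
    hence "norm (f q) \<le> K * exp (- Re q)" using q1 Bim by (intro fb) auto
    also have "\<dots> \<le> K * exp (- real n)" using q1 RK by (intro mult_left_mono) auto
    finally show "norm (f q) \<le> K * exp (- real n)" .
  qed (use RK in auto)
  have V0lim: "V \<longlonglongrightarrow> 0"
  proof (rule Lim_null_comparison)
    have "norm (A n - B n) = \<phi>2 - \<phi>1" for n
    proof -
      have "A n - B n = \<i> * of_real (\<phi>2 - \<phi>1)" by (simp add: complex_eq_iff)
      hence "norm (A n - B n) = norm (complex_of_real (\<phi>2 - \<phi>1))" by (simp only: norm_mult norm_ii mult_1)
      thus ?thesis using assms by (simp only: norm_of_real)
    qed
    thus "eventually (\<lambda>n. norm (V n) \<le> (K * (\<phi>2 - \<phi>1)) * exp (- real n)) sequentially"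
      using Vb unfolding eventually_sequentially by (auto simp: mult_ac)
  qed (rule exp_bound_lim)
  have V0: "V 0 = F (A 0) - F (B 0)"
  proof -
    have "closed_segment (B 0) (A 0) \<subseteq> \<Omega>"
    proof
      fix q assume q: "q \<in> closed_segment (B 0) (A 0)"
      from seg_bounds[OF q] have "Re q = 1/2" by auto
      thus "q \<in> \<Omega>" by (simp add: \<Omega>_def)
    qed
    from contour_integral_unique[OF seg[OF this]] show ?thesis by (simp add: V_def)
  qed
  define a where "a = (\<lambda>k::nat. z ^ k / complex_of_real (Gamma (\<alpha> * real k + \<beta>) powr \<gamma>))"
  have expL: "exp (of_nat k * L) = (- z) ^ k" for k
  proof -
    have "exp L = exp (complex_of_real (ln (norm z))) * exp (\<i> * complex_of_real \<theta>)"
      by (simp add: L_def exp_add)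
    also have "exp (complex_of_real (ln (norm z))) = complex_of_real (norm z)"
      unfolding exp_of_real using z0 by simp
    finally have "exp L = - z" using \<theta> by simp
    thus ?thesis by (simp add: exp_of_nat_mult)
  qed
  have res: "residue f (of_nat k) = - a k" if "k \<ge> 1" for k
  proof -
    define P where "P = (\<lambda>w. - of_real pi * exp (w * L) / G w)"
    have fP: "f = (\<lambda>w. P w / sin (of_real pi * w))"
      by (rule ext) (simp add: f_def P_def GG_reflect divide_inverse mult_ac)
    define s0 where "s0 = ball (of_nat k :: complex) (1/2)"
    have s0SD: "s0 \<subseteq> SD"
    proof
      fix w assume "w \<in> s0"
      hence "norm (w - of_nat k) < 1/2" by (simp add: s0_def dist_norm norm_minus_commute)
      hence "\<bar>Re (w - of_nat k)\<bar> < 1/2" using abs_Re_le_cmod le_less_trans by blast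
      moreover have k1: "real k \<ge> 1" using that by simp
      ultimately show "w \<in> SD" unfolding abs_less_iff by (intro SDpos) simp
    qed
    have Pholo: "P holomorphic_on s0" unfolding P_def
      using G_holo s0SD Gnz
      by (intro holomorphic_intros holomorphic_on_subset[OF G_holo]) (auto simp: SD_def)
    have kin: "of_nat k \<in> s0" by (simp add: s0_def)
    have kSD: "of_nat k \<in> SD" using s0SD kin by auto
    have dsin: "((\<lambda>w::complex. sin (of_real pi * w)) has_field_derivative (of_real pi * cos (of_real pi * of_nat k))) (at (of_nat k))"
      by (auto intro!: derivative_eq_intros)
    have cosk: "cos (of_real pi * of_nat k :: complex) = (-1) ^ k"
      using cos_npi_complex'[of k] by (simp add: mult.commute)
    have sink: "sin (of_real pi * of_nat k :: complex) = 0"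
      using sin_npi_complex'[of k] by (simp add: mult.commute)
    have Gk: "G (of_nat k) = complex_of_real (Gamma (\<alpha> * real k + \<beta>) powr \<gamma>)"
      using G_real[of "real k"] ngt by simp
    have Gk0: "G (of_nat k) \<noteq> 0" using Gnz kSD by blast
    have Pk0: "P (of_nat k) \<noteq> 0" using Gk0 by (simp add: P_def)
    have "residue f (of_nat k) = P (of_nat k) / (of_real pi * cos (of_real pi * of_nat k))"
      unfolding fP
    proof (rule residue_simple_pole_deriv[OF Pholo _ _ _ kin dsin Pk0 sink])
      show "(\<lambda>w. sin (complex_of_real pi * w)) holomorphic_on s0" by (intro holomorphic_intros)
      show "open s0" by (simp add: s0_def)
      show "connected s0" by (simp add: s0_def convex_connected)
      show "complex_of_real pi * cos (complex_of_real pi * of_nat k) \<noteq> 0" by (simp add: cosk)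
    qed
    also have "\<dots> = - a k"
    proof -
      have "P (of_nat k) = - of_real pi * ((-1) ^ k * z ^ k) / G (of_nat k)"
        unfolding P_def expL by (subst power_minus) (rule refl)
      hence "P (of_nat k) / (of_real pi * cos (of_real pi * of_nat k)) = - (z ^ k / G (of_nat k))"
        unfolding cosk by (simp add: divide_simps)
      thus ?thesis by (simp add: Gk a_def)
    qed
    finally show ?thesis .
  qed
  have rect: "(F (B (Suc n)) - F (B n)) + (V (Suc n) + ((F (A n) - F (A (Suc n))) + - V n))
              = 2 * pi * \<i> * residue f (of_nat (Suc n))" for n
  proof -
    define k where "k = (of_nat (Suc n) :: complex)"
    let ?R = "rectpath (B n) (A (Suc n))"
    have R_eq: "?R = linepath (B n) (B (Suc n)) +++ linepath (B (Suc n)) (A (Suc n)) +++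
                     linepath (A (Suc n)) (A n) +++ linepath (A n) (B n)"
      by (simp add: rectpath_def Let_def A_def B_def)
    have bot: "(f has_contour_integral (F (B (Suc n)) - F (B n))) (linepath (B n) (B (Suc n)))"
      using assms by (intro seg lower) auto
    have top: "(f has_contour_integral (F (A n) - F (A (Suc n)))) (linepath (A (Suc n)) (A n))"
      using assms by (intro seg upper) auto
    have left: "(f has_contour_integral (- V n)) (linepath (A n) (B n))"
      using has_contour_integral_reversepath[OF valid_path_linepath Vhas[of n]] by simp
    have tot: "(f has_contour_integral ((F (B (Suc n)) - F (B n)) + (V (Suc n) + ((F (A n) - F (A (Suc n))) + - V n)))) ?R"
      unfolding R_eq
      by (intro has_contour_integral_join bot Vhas top left valid_path_join valid_path_linepath) auto
    define S where "S = box (Complex (real n + 1/4) (\<phi>1 - 1)) (Complex (real n + 7/4) (\<phi>2 + 1))"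
    have kbox: "k \<in> box (B n) (A (Suc n))" using assms by (simp add: k_def in_box_complex_iff)
    have ordR: "Re (B n) \<le> Re (A (Suc n))" "Im (B n) \<le> Im (A (Suc n))" using assms by auto
    have cboxS: "cbox (B n) (A (Suc n)) \<subseteq> S" using assms by (auto simp: S_def in_box_complex_iff in_cbox_complex_iff)
    have piS: "path_image ?R \<subseteq> S" using path_image_rectpath_subset_cbox[OF ordR] cboxS by blast
    have knot: "k \<notin> path_image ?R" using path_image_rectpath_inter_box[OF ordR] kbox by blast
    have SU: "S - {k} \<subseteq> UD"
    proof
      fix q assume q: "q \<in> S - {k}"
      hence q1: "real n + 1/4 < Re q" "Re q < real n + 7/4" by (auto simp: S_def in_box_complex_iff)
      have "q \<notin> \<int>"
      proof
        assume "q \<in> \<int>" then obtain m where m: "q = of_int m" by (auto elim!: Ints_cases)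
        hence "real n < real_of_int m" "real_of_int m < real n + 2" using q1 by auto
        hence "int n < m" "m < int n + 2" by linarith+
        hence "m = int n + 1" by linarith
        hence "q = k" using m by (simp add: k_def)
        thus False using q by auto
      qed
      moreover have "Re q > 0" using q1 by linarith
      ultimately show "q \<in> UD" using SDpos by (auto simp: UD_def)
    qed
    have "contour_integral ?R f = 2 * pi * \<i> * (\<Sum>p\<in>{k}. winding_number ?R p * residue f p)"
    proof (rule Residue_theorem)
      show "open S" unfolding S_def by (rule open_box)
      show "connected S" by (simp add: S_def convex_connected)
      show "f holomorphic_on S - {k}" using fholo SU by (rule holomorphic_on_subset)
      show "path_image ?R \<subseteq> S - {k}" using piS knot by blast
      show "\<forall>z. z \<notin> S \<longrightarrow> winding_number ?R z = 0"
        using piS by (auto intro!: winding_number_zero_outside[of _ S] simp: S_def)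
    qed auto
    moreover have "winding_number ?R k = 1" by (rule winding_number_rectpath[OF kbox])
    ultimately show ?thesis using contour_integral_unique[OF tot] by (simp add: k_def)
  qed
  have ind: "F (A n) - F (B n) - V n = 2 * pi * \<i> * (\<Sum>k<n. a (Suc k))" for n
  proof (induction n)
    case 0 thus ?case using V0 by simp
  next
    case (Suc n)
    have "residue f (of_nat (Suc n)) = - a (Suc n)" by (rule res) simp
    with rect[of n] Suc.IH show ?case by (simp add: algebra_simps)
  qed
  have psum: "(\<lambda>n. \<Sum>k<n. a (Suc k)) \<longlonglongrightarrow> (Lup - Llow) / (2 * pi * \<i>)"
  proof -
    have "(\<lambda>n. (F (A n) - F (B n) - V n) / (2 * pi * \<i>)) \<longlonglongrightarrow> (Lup - Llow - 0) / (2 * pi * \<i>)"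
      by (intro tendsto_intros Lup Llow V0lim) (simp add: complex_eq_iff)
    moreover have "complex_of_real (2 * pi) * \<i> \<noteq> 0" by (simp add: complex_eq_iff)
    ultimately show ?thesis unfolding ind by simp
  qed
  have "a sums (a 0 + (Lup - Llow) / (2 * pi * \<i>))"
    unfolding sums_def
  proof (rule LIMSEQ_imp_Suc)
    show "(\<lambda>n. \<Sum>k<Suc n. a k) \<longlonglongrightarrow> a 0 + (Lup - Llow) / (2 * pi * \<i>)"
      unfolding sum.lessThan_Suc_shift by (intro tendsto_add tendsto_const psum)
  qed
  hence LR: "LeRoy \<alpha> \<beta> \<gamma> z = (Lup - Llow) / (2 * pi * \<i>) + 1 / complex_of_real (Gamma \<beta> powr \<gamma>)"
  proof -
    have "LeRoy \<alpha> \<beta> \<gamma> z = suminf a" unfolding LeRoy_def a_def ..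
    also have "\<dots> = a 0 + (Lup - Llow) / (2 * pi * \<i>)" using \<open>a sums _\<close> by (rule sums_unique[symmetric])
    also have "a 0 = 1 / complex_of_real (Gamma \<beta> powr \<gamma>)" by (simp add: a_def)
    finally show ?thesis by (simp only: add.commute)
  qed
  have gOm: "g t \<in> \<Omega>" for t
  proof (cases "Im (g t) = 0")
    case True hence "g t = of_real c" using loop unfolding right_loop_def by blast
    thus ?thesis using assms by (simp add: \<Omega>_def)
  qed (simp add: \<Omega>_def)
  have Fcont: "continuous_on \<Omega> F"
    using F by (intro continuous_at_imp_continuous_on ballI DERIV_isCont) blast
  have integ: "((\<lambda>t. f (g t) * vector_derivative g (at t)) has_integral (F (g b) - F (g a))) {a..b}"
    if "a \<le> b" for a b
  proof -
    have gpc: "g piecewise_C1_differentiable_on {a..b}" using loop unfolding right_loop_def by blast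
    then obtain S where S: "finite S" "g C1_differentiable_on {a..b} - S" and cg: "continuous_on {a..b} g"
      unfolding piecewise_C1_differentiable_on_def by blast
    have "((\<lambda>t. f (g t) * vector_derivative g (at t)) has_integral ((F \<circ> g) b - (F \<circ> g) a)) {a..b}"
    proof (rule fundamental_theorem_of_calculus_interior_strong[OF S(1) that])
      fix t assume t: "t \<in> {a<..<b} - S"
      hence "g differentiable at t" using S(2) unfolding C1_differentiable_on_eq by auto
      hence "(g has_vector_derivative vector_derivative g (at t)) (at t)" using vector_derivative_works by blast
      from field_vector_diff_chain_at[OF this F[OF gOm[of t]]]
      show "((F \<circ> g) has_vector_derivative f (g t) * vector_derivative g (at t)) (at t)"
        by (simp add: mult.commute)
    next
      show "continuous_on {a..b} (F \<circ> g)"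
        by (rule continuous_on_compose[OF cg continuous_on_subset[OF Fcont]]) (use gOm in auto)
    qed
    thus ?thesis by simp
  qed
  have intble: "(\<lambda>t. f (g t) * vector_derivative g (at t)) integrable_on {a..b}" for a b
  proof (cases "a \<le> b")
    case True thus ?thesis using integ by blast
  next
    case False hence "{a..b} = {}" by simp
    thus ?thesis by (simp only: integrable_on_empty)
  qed
  have tail: "((\<lambda>t. F (h t)) \<longlongrightarrow> Lim) Fl"
    if hRe: "filterlim (\<lambda>t. Re (h t)) at_top Fl" and hIm: "((\<lambda>t. Im (h t)) \<longlongrightarrow> \<phi>) Fl"
      and hL: "(\<lambda>n. F (Complex (real n + 1/2) \<phi>)) \<longlonglongrightarrow> Lim" and \<phi>: "\<phi> = \<phi>1 \<or> \<phi> = \<phi>2"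
      and hB: "\<And>t. \<bar>Im (h t)\<bar> \<le> Bim" for h :: "real \<Rightarrow> complex" and Fl \<phi> Lim
  proof -
    have \<phi>0: "\<bar>\<phi>\<bar> \<ge> 2 * \<delta>" "\<bar>\<phi>\<bar> \<le> Bim" using \<phi> \<delta> Bim assms by auto
    define N where "N = (\<lambda>t. nat \<lfloor>Re (h t)\<rfloor>)"
    have Nlim: "filterlim N at_top Fl"
      unfolding filterlim_at_top
    proof
      fix Z :: nat
      from hRe have "eventually (\<lambda>t. real Z \<le> Re (h t)) Fl" by (simp add: filterlim_at_top)
      thus "eventually (\<lambda>t. Z \<le> N t) Fl"
        by eventually_elim (simp add: N_def le_nat_iff le_floor_iff)
    qed
    have ev1: "eventually (\<lambda>t. \<bar>Im (h t) - \<phi>\<bar> < \<bar>\<phi>\<bar> / 2) Fl"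
    proof -
      have "\<bar>\<phi>\<bar> / 2 > 0" using \<phi>0 \<delta> by linarith
      thus ?thesis using hIm unfolding tendsto_iff dist_real_def by blast
    qed
    have ev2: "eventually (\<lambda>t. Re (h t) \<ge> real NR + 1) Fl" using hRe by (simp add: filterlim_at_top)
    have evb: "eventually (\<lambda>t. norm (F (h t) - F (Complex (real (N t) + 1/2) \<phi>)) \<le> (K * (2 * Bim + 1)) * exp (- real (N t))) Fl"
      using ev1 ev2
    proof eventually_elim
      case (elim t)
      define x where "x = Re (h t)"
      define M where "M = N t"
      have x0: "x \<ge> 0" using elim by (simp add: x_def)
      have xM: "real M \<le> x" "x < real M + 1" using x0 by (simp_all add: M_def N_def x_def)
      have MNR: "real M \<ge> R" using xM elim NR by (simp add: x_def)
      define C where "C = Complex (real M + 1/2) \<phi>"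
      define p where "p = Complex (real M + 1/2) (Im (h t))"
      have gq: "\<bar>Im q\<bar> \<ge> \<delta> \<and> \<bar>Im q\<bar> \<le> Bim"
        if "min \<phi> (Im (h t)) \<le> Im q" "Im q \<le> max \<phi> (Im (h t))" for q
      proof -
        have "\<bar>Im q - \<phi>\<bar> < \<bar>\<phi>\<bar> / 2" using that elim by (auto simp: min_def max_def abs_less_iff split: if_splits)
        hence "\<bar>Im q\<bar> \<ge> \<delta>" using \<phi>0 by linarith
        moreover have "\<bar>Im q\<bar> \<le> Bim" using that \<phi>0 hB[of t] by (auto simp: min_def max_def abs_le_iff split: if_splits)
        ultimately show ?thesis by simp
      qed
      have s1: "closed_segment C p \<subseteq> \<Omega>"
      proof
        fix q assume "q \<in> closed_segment C p"
        from seg_bounds[OF this] have "\<bar>Im q\<bar> \<ge> \<delta>" using gq by (simp add: C_def p_def)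
        thus "q \<in> \<Omega>" using \<delta> by (auto simp: \<Omega>_def)
      qed
      have s2: "closed_segment p (h t) \<subseteq> \<Omega>"
      proof
        fix q assume "q \<in> closed_segment p (h t)"
        from seg_bounds[OF this] have "Im q = Im (h t)" by (simp add: p_def)
        hence "\<bar>Im q\<bar> \<ge> \<delta>" using gq[of q] by (simp add: min_le_iff_disj le_max_iff_disj)
        thus "q \<in> \<Omega>" using \<delta> by (auto simp: \<Omega>_def)
      qed
      have b1: "norm (F p - F C) \<le> K * exp (- real M) * norm (p - C)"
      proof (rule segb[OF s1])
        fix q assume q: "q \<in> closed_segment C p"
        from seg_bounds[OF q] have q1: "Re q = real M + 1/2" "\<bar>Im q\<bar> \<ge> \<delta> \<and> \<bar>Im q\<bar> \<le> Bim"
          using gq by (simp_all add: C_def p_def)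
        hence "norm (f q) \<le> K * exp (- Re q)" using MNR by (intro fb) auto
        also have "\<dots> \<le> K * exp (- real M)" using q1 RK by (intro mult_left_mono) auto
        finally show "norm (f q) \<le> K * exp (- real M)" .
      qed (use RK in auto)
      have b2: "norm (F (h t) - F p) \<le> K * exp (- real M) * norm (h t - p)"
      proof (rule segb[OF s2])
        fix q assume q: "q \<in> closed_segment p (h t)"
        from seg_bounds[OF q] have q0: "Re q \<ge> real M" "Im q = Im (h t)"
          using xM by (auto simp: p_def x_def)
        have q1: "Re q \<ge> real M" "\<bar>Im q\<bar> \<ge> \<delta> \<and> \<bar>Im q\<bar> \<le> Bim"
          using q0 gq[of q] by (simp_all add: min_le_iff_disj le_max_iff_disj)
        hence "norm (f q) \<le> K * exp (- Re q)" using MNR by (intro fb) auto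
        also have "\<dots> \<le> K * exp (- real M)" using q1 RK by (intro mult_left_mono) auto
        finally show "norm (f q) \<le> K * exp (- real M)" .
      qed (use RK in auto)
      have l1: "norm (p - C) \<le> 2 * Bim"
      proof -
        have "p - C = \<i> * of_real (Im (h t) - \<phi>)" by (simp add: p_def C_def complex_eq_iff)
        hence "norm (p - C) = \<bar>Im (h t) - \<phi>\<bar>" by (simp only: norm_mult norm_ii mult_1 norm_of_real)
        thus ?thesis using hB[of t] \<phi>0 by linarith
      qed
      have l2: "norm (h t - p) \<le> 1"
      proof -
        have "h t - p = of_real (x - (real M + 1/2))" by (simp add: p_def x_def complex_eq_iff)
        hence "norm (h t - p) = \<bar>x - (real M + 1/2)\<bar>" by (simp only: norm_of_real)
        thus ?thesis using xM by linarith
      qed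
      have KM: "K * exp (- real M) \<ge> 0" using RK by simp
      have "norm (F (h t) - F C) \<le> norm (F p - F C) + norm (F (h t) - F p)"
        using norm_triangle_ineq[of "F p - F C" "F (h t) - F p"] by simp
      also have "\<dots> \<le> K * exp (- real M) * (2 * Bim) + K * exp (- real M) * 1"
        using b1 b2 mult_left_mono[OF l1 KM] mult_left_mono[OF l2 KM] by linarith
      also have "\<dots> = (K * (2 * Bim + 1)) * exp (- real M)" by (simp add: algebra_simps)
      finally show ?case by (simp add: C_def M_def)
    qed
    have "((\<lambda>t. F (h t) - F (Complex (real (N t) + 1/2) \<phi>)) \<longlongrightarrow> 0) Fl"
    proof (rule Lim_null_comparison[OF evb])
      show "((\<lambda>t. K * (2 * Bim + 1) * exp (- real (N t))) \<longlongrightarrow> 0) Fl"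
        using filterlim_compose[OF exp_bound_lim[of "K * (2 * Bim + 1)"] Nlim] by simp
    qed
    moreover have "((\<lambda>t. F (Complex (real (N t) + 1/2) \<phi>)) \<longlongrightarrow> Lim) Fl"
      using filterlim_compose[OF hL Nlim] by simp
    ultimately have "((\<lambda>t. (F (h t) - F (Complex (real (N t) + 1/2) \<phi>)) + F (Complex (real (N t) + 1/2) \<phi>)) \<longlongrightarrow> 0 + Lim) Fl"
      by (rule tendsto_add)
    thus ?thesis by simp
  qed
  have loop': "filterlim (\<lambda>t. Re (g t)) at_top at_bot" "filterlim (\<lambda>t. Re (g t)) at_top at_top"
     "((\<lambda>t. Im (g t)) \<longlongrightarrow> \<phi>1) at_bot" "((\<lambda>t. Im (g t)) \<longlongrightarrow> \<phi>2) at_top"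
    using loop unfolding right_loop_def by blast+
  have upT: "((\<lambda>t. F (g t)) \<longlongrightarrow> Lup) at_top"
    by (rule tail[OF loop'(2) loop'(4)]) (use Lup Bim in \<open>auto simp: A_def\<close>)
  have loB: "((\<lambda>t. F (g t)) \<longlongrightarrow> Llow) at_bot"
    by (rule tail[OF loop'(1) loop'(3)]) (use Llow Bim in \<open>auto simp: B_def\<close>)
  have "((\<lambda>(a, b). integral {a..b} (\<lambda>t. f (g t) * vector_derivative g (at t))) \<longlongrightarrow> Lup - Llow)
          (at_bot \<times>\<^sub>F at_top)"
  proof -
    have lim: "((\<lambda>p. F (g (snd p)) - F (g (fst p))) \<longlongrightarrow> Lup - Llow) (at_bot \<times>\<^sub>F at_top)"
      by (intro tendsto_diff filterlim_compose[OF upT filterlim_snd] filterlim_compose[OF loB filterlim_fst])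
    have ev: "eventually (\<lambda>p. F (g (snd p)) - F (g (fst p)) = (\<lambda>(a, b). integral {a..b} (\<lambda>t. f (g t) * vector_derivative g (at t))) p) (at_bot \<times>\<^sub>F at_top)"
      unfolding eventually_prod_filter
    proof (intro exI conjI)
      show "eventually (\<lambda>a::real. a \<le> 0) at_bot" by (rule eventually_le_at_bot)
      show "eventually (\<lambda>b::real. 0 \<le> b) at_top" by (rule eventually_ge_at_top)
      show "\<forall>a b. a \<le> 0 \<longrightarrow> 0 \<le> b \<longrightarrow> F (g (snd (a, b))) - F (g (fst (a, b))) =
              (\<lambda>(a, b). integral {a..b} (\<lambda>t. f (g t) * vector_derivative g (at t))) (a, b)"
        using integ by (auto intro!: integral_unique[symmetric])
    qed
    show ?thesis using tendsto_cong[OF ev] lim by simp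
  qed
  hence "improper_contour_integral f g (Lup - Llow)"
    unfolding improper_contour_integral_def using intble by blast
  thus ?thesis using LR unfolding f_def L_def by blast
qed

end
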